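(* Let $\mathcal{A}=(Q,\Sigma,t,o)$ be an expanding automaton. There is an algorithm which, given $q\in Q$, decides whether the map $q:\Sigma^*\to\Sigma^*$ is injective.
   Context: An expanding automaton is a quadruple $\mathcal{A}=(Q,\Sigma,t,o)$ with $Q$ a finite set of states, $\Sigma$ a finite alphabet, $t:Q\times\Sigma\to Q$ and $o:Q\times\Sigma\to\Sigma^+$. Each state $q$ induces $q:\Sigma^*\to\Sigma^*$ by $q(\emptyset)=\emptyset$ and $q(\sigma w)=o(q,\sigma)\,q'(w)$ with $q'=t(q,\sigma)$. *)

theory Defs
  imports Main "HOL-Library.Nat_Bijection"
begin

datatype recf =
    Zero
  | Succ
  | Proj nat
  | Comp recf "recf list"
  | Prim recf recf
  | Mn recf

inductive eval :: "recf \<Rightarrow> nat list \<Rightarrow> nat \<Rightarrow> bool" where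
  eval_Zero: "eval Zero xs 0"
| eval_Succ: "eval Succ (x # xs) (Suc x)"
| eval_Proj: "i < length xs \<Longrightarrow> eval (Proj i) xs (xs ! i)"
| eval_Comp: "list_all2 (\<lambda>g y. eval g xs y) gs ys \<Longrightarrow> eval f ys z \<Longrightarrow> eval (Comp f gs) xs z"
| eval_Prim0: "eval f xs z \<Longrightarrow> eval (Prim f g) (0 # xs) z"
| eval_PrimS: "eval (Prim f g) (n # xs) y \<Longrightarrow> eval g (y # n # xs) z
                 \<Longrightarrow> eval (Prim f g) (Suc n # xs) z"
| eval_Mn: "eval f (n # xs) 0 \<Longrightarrow> (\<forall>m<n. \<exists>k. k \<noteq> 0 \<and> eval f (m # xs) k)
             \<Longrightarrow> eval (Mn f) xs n"
monos list_all2_mono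

text \<open>States are 0..<nQ, letters are 0..<nS.  The transition function is the
  table tt (t(q,a) = tt!q!a) and the output function is the table oo
  (o(q,a) = oo!q!a, a nonempty word).\<close>

datatype automaton = Aut (nQ: nat) (nS: nat) (ttab: "nat list list") (otab: "nat list list list")

definition expanding_automaton :: "automaton \<Rightarrow> bool" where
  "expanding_automaton A \<longleftrightarrow>
     length (ttab A) = nQ A \<and> length (otab A) = nQ A \<and>
     (\<forall>q < nQ A. length (ttab A ! q) = nS A \<and> length (otab A ! q) = nS A \<and>
        (\<forall>a < nS A. ttab A ! q ! a < nQ A \<and> otab A ! q ! a \<noteq> [] \<and>
                    set (otab A ! q ! a) \<subseteq> {..<nS A}))"

fun state_map :: "automaton \<Rightarrow> nat \<Rightarrow> nat list \<Rightarrow> nat list" where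
  "state_map A q [] = []"
| "state_map A q (a # w) = otab A ! q ! a @ state_map A (ttab A ! q ! a) w"

definition encode_instance :: "automaton \<Rightarrow> nat \<Rightarrow> nat" where
  "encode_instance A q = list_encode
     [nQ A, nS A,
      list_encode (map list_encode (ttab A)),
      list_encode (map (\<lambda>row. list_encode (map list_encode row)) (otab A)),
      q]"

end

theory Submission
  imports Defs
begin


definition comp_by :: "nat \<Rightarrow> recf \<Rightarrow> (nat list \<Rightarrow> nat) \<Rightarrow> bool" where
  "comp_by n p f \<longleftrightarrow> (\<forall>xs. length xs = n \<longrightarrow> eval p xs (f xs))"

definition computable :: "nat \<Rightarrow> (nat list \<Rightarrow> nat) \<Rightarrow> bool" where
  "computable n f \<longleftrightarrow> (\<exists>p. comp_by n p f)"

lemma computable_cong: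
  "computable n f \<Longrightarrow> (\<And>xs. length xs = n \<Longrightarrow> f xs = g xs) \<Longrightarrow> computable n g"
  unfolding computable_def comp_by_def by metis

lemma c_zero: "computable n (\<lambda>xs. 0)"
  unfolding computable_def comp_by_def by (rule exI[of _ Zero]) (simp add: eval_Zero)

lemma c_proj: "i < n \<Longrightarrow> computable n (\<lambda>xs. xs ! i)"
  unfolding computable_def comp_by_def by (rule exI[of _ "Proj i"]) (simp add: eval_Proj)

lemma c_suc: "computable n f \<Longrightarrow> computable n (\<lambda>xs. Suc (f xs))"
  unfolding computable_def comp_by_def
proof (elim exE)
  fix p assume h: "\<forall>xs. length xs = n \<longrightarrow> eval p xs (f xs)"
  show "\<exists>p. \<forall>xs. length xs = n \<longrightarrow> eval p xs (Suc (f xs))"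
  proof (intro exI allI impI)
    fix xs :: "nat list" assume "length xs = n"
    then have "list_all2 (\<lambda>g y. eval g xs y) [p] [f xs]" using h by simp
    then show "eval (Comp Succ [p]) xs (Suc (f xs))"
      using eval_Comp eval_Succ[of "f xs" "[]"] by blast
  qed
qed

lemma c_const: "computable n (\<lambda>xs. c)"
  by (induction c) (auto intro: c_zero c_suc)

lemma choose_progs:
  assumes "\<forall>g\<in>set gs. computable n g"
  shows "\<exists>ps. list_all2 (\<lambda>p g. comp_by n p g) ps gs"
  using assms
proof (induction gs)
  case Nil then show ?case by auto
next
  case (Cons g gs)
  then obtain ps where "list_all2 (\<lambda>p g. comp_by n p g) ps gs" by auto
  moreover obtain p where "comp_by n p g" using Cons.prems computable_def by auto
  ultimately show ?case by (intro exI[of _ "p # ps"]) auto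
qed

lemma c_comp_list:
  assumes F: "computable (length gs) F" and G: "\<forall>g\<in>set gs. computable n g"
  shows "computable n (\<lambda>xs. F (map (\<lambda>g. g xs) gs))"
proof -
  obtain pF where pF: "comp_by (length gs) pF F" using F computable_def by auto
  obtain ps where ps: "list_all2 (\<lambda>p g. comp_by n p g) ps gs" using choose_progs[OF G] by auto
  have "comp_by n (Comp pF ps) (\<lambda>xs. F (map (\<lambda>g. g xs) gs))"
    unfolding comp_by_def
  proof (intro allI impI)
    fix xs :: "nat list" assume len: "length xs = n"
    have "list_all2 (\<lambda>g y. eval g xs y) ps (map (\<lambda>g. g xs) gs)"
      using ps len by (auto simp: list_all2_conv_all_nth comp_by_def)
    moreover have "eval pF (map (\<lambda>g. g xs) gs) (F (map (\<lambda>g. g xs) gs))"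
      using pF unfolding comp_by_def by simp
    ultimately show "eval (Comp pF ps) xs (F (map (\<lambda>g. g xs) gs))" by (rule eval_Comp)
  qed
  then show ?thesis unfolding computable_def by blast
qed

lemma prim_comp_by:
  assumes b: "comp_by n pb b" and s: "comp_by (Suc (Suc n)) ps s"
  shows "comp_by (Suc n) (Prim pb ps) (\<lambda>ys. rec_nat (b (tl ys)) (\<lambda>k r. s (r # k # tl ys)) (hd ys))"
  unfolding comp_by_def
proof (intro allI impI)
  fix ys :: "nat list" assume "length ys = Suc n"
  then obtain x xs where ys: "ys = x # xs" and len: "length xs = n" by (cases ys) auto
  have "eval (Prim pb ps) (x # xs) (rec_nat (b xs) (\<lambda>k r. s (r # k # xs)) x)"
  proof (induction x)
    case 0 then show ?case using b len unfolding comp_by_def by (auto intro: eval_Prim0)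
  next
    case (Suc x)
    then show ?case using s len unfolding comp_by_def by (auto intro: eval_PrimS)
  qed
  then show "eval (Prim pb ps) ys (rec_nat (b (tl ys)) (\<lambda>k r. s (r # k # tl ys)) (hd ys))"
    using ys by simp
qed

lemma map_nth': "length xs = n \<Longrightarrow> map ((!) xs) [0..<n] = xs"
  by (metis map_nth)

lemma map_proj: "length xs = n \<Longrightarrow> map (\<lambda>g. g xs) (map (\<lambda>i xs. xs ! i) [0..<n]) = xs"
  by (simp add: comp_def map_nth')

lemma c_rec:
  assumes b: "computable n b" and s: "computable (Suc (Suc n)) s" and f: "computable n f"
  shows "computable n (\<lambda>xs. rec_nat (b xs) (\<lambda>k r. s (r # k # xs)) (f xs))"
proof -
  obtain pb ps where "comp_by n pb b" "comp_by (Suc (Suc n)) ps s"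
    using b s computable_def by auto
  then have P: "computable (Suc n) (\<lambda>ys. rec_nat (b (tl ys)) (\<lambda>k r. s (r # k # tl ys)) (hd ys))"
    using prim_comp_by computable_def by blast
  let ?gs = "f # map (\<lambda>i xs. xs ! i) [0..<n]"
  have "computable n (\<lambda>xs. (\<lambda>ys. rec_nat (b (tl ys)) (\<lambda>k r. s (r # k # tl ys)) (hd ys)) (map (\<lambda>g. g xs) ?gs))"
    by (rule c_comp_list) (use P f c_proj in auto)
  then show ?thesis
    by (rule computable_cong) (simp add: comp_def map_nth')
qed

lemma c_reindex:
  assumes F: "computable m F" and idx: "\<forall>i<m. idx i < n"
  shows "computable n (\<lambda>ys. F (map (\<lambda>i. ys ! idx i) [0..<m]))"
proof -
  have "computable n (\<lambda>ys. F (map (\<lambda>g. g ys) (map (\<lambda>i ys. ys ! idx i) [0..<m])))"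
    by (rule c_comp_list) (use F idx c_proj in auto)
  then show ?thesis by (simp add: comp_def)
qed

lemma c_drop2: "computable n g \<Longrightarrow> computable (Suc (Suc n)) (\<lambda>ys. g (drop 2 ys))"
  apply (drule c_reindex[where idx="\<lambda>i. i + 2" and n="Suc (Suc n)"])
   apply simp
  apply (erule computable_cong)
  apply (rule arg_cong[where f=g])
  apply (rule nth_equalityI) apply auto
  done

lemma c_shift1: "computable (Suc n) g \<Longrightarrow> computable (Suc (Suc n)) (\<lambda>ys. g (ys ! 1 # drop 2 ys))"
  apply (drule c_reindex[where idx="\<lambda>i. if i = 0 then 1 else i + 1" and n="Suc (Suc n)"])
   apply simp
  apply (erule computable_cong)
  apply (rule arg_cong[where f=g])
  apply (rule nth_equalityI) apply (auto simp: nth_Cons' simp del: upt_Suc)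
  done

lemma c_add: "computable n f \<Longrightarrow> computable n g \<Longrightarrow> computable n (\<lambda>xs. f xs + g xs)"
proof -
  assume f: "computable n f" and g: "computable n g"
  have "computable n (\<lambda>xs. rec_nat (g xs) (\<lambda>k r. (\<lambda>ys. Suc (ys ! 0)) (r # k # xs)) (f xs))"
    by (rule c_rec) (use f g c_suc c_proj in auto)
  moreover have "\<And>x y. rec_nat y (\<lambda>k r. Suc r) x = x + y" by (induct_tac x) auto
  ultimately show ?thesis by simp
qed

lemma c_sub: "computable n f \<Longrightarrow> computable n g \<Longrightarrow> computable n (\<lambda>xs. f xs - g xs)"
proof -
  assume f: "computable n f" and g: "computable n g"
  have pred: "computable (Suc (Suc n)) (\<lambda>ys. rec_nat 0 (\<lambda>k r. (\<lambda>zs. zs ! 1) (r # k # ys)) (ys ! 0))"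
    by (rule c_rec) (auto intro: c_const c_proj)
  have e: "\<And>x. rec_nat 0 (\<lambda>k r. k) x = x - 1" by (induct_tac x) auto
  have "computable n (\<lambda>xs. rec_nat (f xs) (\<lambda>k r. (\<lambda>ys. rec_nat 0 (\<lambda>k r. (\<lambda>zs. zs ! 1) (r # k # ys)) (ys ! 0)) (r # k # xs)) (g xs))"
    by (rule c_rec) (use f g pred in auto)
  moreover have "\<And>x y. rec_nat y (\<lambda>k r. r - 1) x = y - x" by (induct_tac x) auto
  ultimately show ?thesis by (simp add: e)
qed

lemma c_mult: "computable n f \<Longrightarrow> computable n g \<Longrightarrow> computable n (\<lambda>xs. f xs * g xs)"
proof -
  assume f: "computable n f" and g: "computable n g"
  have "computable n (\<lambda>xs. rec_nat 0 (\<lambda>k r. (\<lambda>ys. ys ! 0 + g (drop 2 ys)) (r # k # xs)) (f xs))"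
    by (rule c_rec) (use f g in \<open>auto intro!: c_const c_add c_proj c_drop2\<close>)
  moreover have "\<And>x y. rec_nat 0 (\<lambda>k r. r + y) x = x * y" by (induct_tac x) auto
  ultimately show ?thesis by simp
qed

lemma c_ifz: "computable n f \<Longrightarrow> computable n g \<Longrightarrow> computable n h \<Longrightarrow>
   computable n (\<lambda>xs. if f xs = 0 then g xs else h xs)"
proof -
  assume f: "computable n f" and g: "computable n g" and h: "computable n h"
  have "computable n (\<lambda>xs. rec_nat (g xs) (\<lambda>k r. (\<lambda>ys. h (drop 2 ys)) (r # k # xs)) (f xs))"
    by (rule c_rec) (use f g h in \<open>auto intro!: c_drop2\<close>)
  moreover have "rec_nat (g xs) (\<lambda>k r. h xs) x = (if x = 0 then g xs else h xs)" for x xs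
    by (cases x) auto
  ultimately show ?thesis by simp
qed

definition cpred :: "nat \<Rightarrow> (nat list \<Rightarrow> bool) \<Rightarrow> bool" where
  "cpred n P \<longleftrightarrow> computable n (\<lambda>xs. if P xs then 1 else 0)"

lemma c_if: "cpred n P \<Longrightarrow> computable n f \<Longrightarrow> computable n g \<Longrightarrow>
   computable n (\<lambda>xs. if P xs then f xs else g xs)"
proof -
  assume P: "cpred n P" and f: "computable n f" and g: "computable n g"
  have "computable n (\<lambda>xs. if (if P xs then 1 else 0::nat) = 0 then g xs else f xs)"
    using c_ifz[OF P[unfolded cpred_def] g f] by simp
  then show ?thesis by (rule computable_cong) auto
qed

lemma p_eq: "computable n f \<Longrightarrow> computable n g \<Longrightarrow> cpred n (\<lambda>xs. f xs = g xs)"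
  unfolding cpred_def
  apply (rule computable_cong[where f="\<lambda>xs. if (f xs - g xs) + (g xs - f xs) = 0 then 1 else 0"])
   apply (intro c_ifz c_add c_sub c_const) apply auto done

lemma p_le: "computable n f \<Longrightarrow> computable n g \<Longrightarrow> cpred n (\<lambda>xs. f xs \<le> g xs)"
  unfolding cpred_def
  apply (rule computable_cong[where f="\<lambda>xs. if f xs - g xs = 0 then 1 else 0"])
   apply (intro c_ifz c_sub c_const) apply auto done

lemma p_less: "computable n f \<Longrightarrow> computable n g \<Longrightarrow> cpred n (\<lambda>xs. f xs < g xs)"
  unfolding cpred_def
  apply (rule computable_cong[where f="\<lambda>xs. if g xs - f xs = 0 then 0 else 1"])
   apply (intro c_ifz c_sub c_const) apply auto done

lemma p_not: "cpred n P \<Longrightarrow> cpred n (\<lambda>xs. \<not> P xs)"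
  unfolding cpred_def
  apply (drule c_ifz[where g="\<lambda>_. 1" and h="\<lambda>_. 0"])
  by (auto intro: c_const elim!: computable_cong)

lemma p_conj: "cpred n P \<Longrightarrow> cpred n Q \<Longrightarrow> cpred n (\<lambda>xs. P xs \<and> Q xs)"
proof -
  assume P: "cpred n P" and Q: "cpred n Q"
  have "computable n (\<lambda>xs. if (if P xs then 1 else 0::nat) = 0 then 0 else (if Q xs then 1 else 0))"
    using c_ifz[OF P[unfolded cpred_def] c_const Q[unfolded cpred_def]] by simp
  then show ?thesis unfolding cpred_def by (rule computable_cong) auto
qed

lemma c_sum: "computable (Suc n) g \<Longrightarrow> computable n f \<Longrightarrow>
   computable n (\<lambda>xs. \<Sum>i<f xs. g (i # xs))"
proof -
  assume g: "computable (Suc n) g" and f: "computable n f"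
  have "computable n (\<lambda>xs. rec_nat 0 (\<lambda>k r. (\<lambda>ys. ys ! 0 + g (ys ! 1 # drop 2 ys)) (r # k # xs)) (f xs))"
    by (rule c_rec[OF c_const c_add[OF c_proj c_shift1[OF g]] f]) simp
  moreover have "\<And>x xs. rec_nat 0 (\<lambda>k r. r + g (k # xs)) x = (\<Sum>i<x. g (i # xs))"
    by (induct_tac x) auto
  ultimately show ?thesis by simp
qed

lemma p_ex: "cpred (Suc n) P \<Longrightarrow> computable n f \<Longrightarrow> cpred n (\<lambda>xs. \<exists>i<f xs. P (i # xs))"
proof -
  assume P: "cpred (Suc n) P" and f: "computable n f"
  have S: "computable n (\<lambda>xs. \<Sum>i<f xs. (\<lambda>ys. if P ys then 1 else 0) (i # xs))"
    using P f c_sum unfolding cpred_def by blast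
  have "cpred n (\<lambda>xs. (0::nat) < (\<Sum>i<f xs. (\<lambda>ys. if P ys then 1 else 0) (i # xs)))"
    by (rule p_less[OF c_const S])
  moreover have "(0 < (\<Sum>i<x. (if P (i # xs) then 1 else 0::nat))) = (\<exists>i<x. P (i # xs))" for x xs
    by (simp only: neq0_conv[symmetric] sum_eq_0_iff[OF finite_lessThan]) auto
  ultimately show ?thesis by simp
qed



lemma lift1: "computable 1 (\<lambda>ys. F (ys ! 0)) \<Longrightarrow> computable n f \<Longrightarrow> computable n (\<lambda>xs. F (f xs))"
  using c_comp_list[of "[f]" "\<lambda>ys. F (ys ! 0)" n] by simp

lemma lift2: "computable 2 (\<lambda>ys. F (ys ! 0) (ys ! 1)) \<Longrightarrow> computable n f \<Longrightarrow> computable n g \<Longrightarrow>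
   computable n (\<lambda>xs. F (f xs) (g xs))"
  using c_comp_list[of "[f, g]" "\<lambda>ys. F (ys ! 0) (ys ! 1)" n] by (simp add: numeral_2_eq_2)

lemma lift3: "computable 3 (\<lambda>ys. F (ys ! 0) (ys ! 1) (ys ! 2)) \<Longrightarrow> computable n f \<Longrightarrow> computable n g \<Longrightarrow>
   computable n h \<Longrightarrow> computable n (\<lambda>xs. F (f xs) (g xs) (h xs))"
  using c_comp_list[of "[f, g, h]" "\<lambda>ys. F (ys ! 0) (ys ! 1) (ys ! 2)" n] by (simp add: numeral_3_eq_3)

lemma lift4: "computable 4 (\<lambda>ys. F (ys ! 0) (ys ! 1) (ys ! 2) (ys ! 3)) \<Longrightarrow> computable n f \<Longrightarrow> computable n g \<Longrightarrow>
   computable n h \<Longrightarrow> computable n i \<Longrightarrow> computable n (\<lambda>xs. F (f xs) (g xs) (h xs) (i xs))"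
  using c_comp_list[of "[f, g, h, i]" "\<lambda>ys. F (ys ! 0) (ys ! 1) (ys ! 2) (ys ! 3)" n]
  by (simp add: eval_nat_numeral)

lemmas cI = c_const c_proj c_suc c_add c_sub c_mult c_if p_eq p_le p_less p_not p_conj

lemma tri_rec: "triangle x = rec_nat 0 (\<lambda>k r. r + Suc k) x"
  by (induct x) auto

lemma c_tri: "computable n f \<Longrightarrow> computable n (\<lambda>xs. triangle (f xs))"
  apply (rule lift1[where F=triangle], simp_all)
  apply (rule computable_cong[OF c_rec[where b="\<lambda>_. 0" and s="\<lambda>ys. ys ! 0 + Suc (ys ! 1)" and f="\<lambda>ys. ys ! 0"]])
     apply (auto intro!: cI simp: tri_rec)
  done

lemma c_pe: "computable n f \<Longrightarrow> computable n g \<Longrightarrow> computable n (\<lambda>xs. prod_encode (f xs, g xs))"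
  unfolding prod_encode_def by (auto intro!: cI c_tri)

lemma triangle_mono: "a \<le> b \<Longrightarrow> triangle a \<le> triangle b"
  by (induct b) (auto simp: le_Suc_eq)

lemma triangle_ge: "k \<le> triangle k"
  by (induct k) auto

definition Kf :: "nat \<Rightarrow> nat" where
  "Kf z = (\<Sum>i<z. if triangle (Suc i) \<le> z then 1 else 0)"
definition pfst :: "nat \<Rightarrow> nat" where "pfst z = z - triangle (Kf z)"
definition psnd :: "nat \<Rightarrow> nat" where "psnd z = Kf z - pfst z"

lemma sum_ind_less: "(\<Sum>i<z. if i < k then 1 else 0::nat) = min z k"
  by (induct z) auto

lemma prod_decode_pf: "prod_decode z = (pfst z, psnd z)"
proof -
  obtain m n where d: "prod_decode z = (m, n)" by fastforce
  then have z: "z = triangle (m + n) + m"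
    using prod_decode_inverse[of z] by (simp add: prod_encode_def)
  have iff: "triangle (Suc i) \<le> z \<longleftrightarrow> i < m + n" for i
  proof
    assume "triangle (Suc i) \<le> z"
    show "i < m + n"
    proof (rule ccontr)
      assume "\<not> i < m + n"
      then have "triangle (Suc (m + n)) \<le> triangle (Suc i)" by (intro triangle_mono) auto
      then show False using \<open>triangle (Suc i) \<le> z\<close> z by simp
    qed
  next
    assume "i < m + n"
    then show "triangle (Suc i) \<le> z" using triangle_mono[of "Suc i" "m+n"] z by simp
  qed
  have "m + n \<le> z" using triangle_ge[of "m+n"] z by simp
  then have K: "Kf z = m + n" unfolding Kf_def iff sum_ind_less by simp
  show ?thesis using d z K by (simp add: pfst_def psnd_def)
qed

lemma c_Kf: "computable n f \<Longrightarrow> computable n (\<lambda>xs. Kf (f xs))"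
  apply (rule lift1[where F=Kf], simp_all)
  unfolding Kf_def
  apply (rule computable_cong[OF c_sum[where g="\<lambda>ys. if triangle (Suc (ys ! 0)) \<le> ys ! 1 then 1 else 0"
        and f="\<lambda>ys. ys ! 0"]])
    apply (auto intro!: cI c_tri simp: cpred_def[symmetric])
  done

lemma c_pfst: "computable n f \<Longrightarrow> computable n (\<lambda>xs. pfst (f xs))"
  unfolding pfst_def by (auto intro!: cI c_tri c_Kf)
lemma c_psnd: "computable n f \<Longrightarrow> computable n (\<lambda>xs. psnd (f xs))"
  unfolding psnd_def by (auto intro!: cI c_tri c_Kf c_pfst)

definition chd :: "nat \<Rightarrow> nat" where "chd c = pfst (c - 1)"
definition ctl :: "nat \<Rightarrow> nat" where "ctl c = psnd (c - 1)"
definition ctln :: "nat \<Rightarrow> nat \<Rightarrow> nat" where "ctln c i = rec_nat c (\<lambda>k r. ctl r) i"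
definition cnth :: "nat \<Rightarrow> nat \<Rightarrow> nat" where "cnth c i = chd (ctln c i)"
definition clen :: "nat \<Rightarrow> nat" where "clen c = (\<Sum>i<c. if ctln c i = 0 then 0 else 1)"
definition ccons :: "nat \<Rightarrow> nat \<Rightarrow> nat" where "ccons x y = Suc (prod_encode (x, y))"
definition capp :: "nat \<Rightarrow> nat \<Rightarrow> nat" where
  "capp c d = rec_nat d (\<lambda>k r. ccons (cnth c (clen c - Suc k)) r) (clen c)"

lemma c_chd: "computable n f \<Longrightarrow> computable n (\<lambda>xs. chd (f xs))"
  unfolding chd_def by (auto intro!: cI c_pfst)
lemma c_ctl: "computable n f \<Longrightarrow> computable n (\<lambda>xs. ctl (f xs))"
  unfolding ctl_def by (auto intro!: cI c_psnd)
lemma c_ccons: "computable n f \<Longrightarrow> computable n g \<Longrightarrow> computable n (\<lambda>xs. ccons (f xs) (g xs))"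
  unfolding ccons_def by (auto intro!: cI c_pe)

lemma c_ctln: "computable n f \<Longrightarrow> computable n g \<Longrightarrow> computable n (\<lambda>xs. ctln (f xs) (g xs))"
  apply (rule lift2[where F=ctln], simp_all)
  unfolding ctln_def
  apply (rule computable_cong[OF c_rec[where b="\<lambda>ys. ys ! 0" and s="\<lambda>ys. ctl (ys ! 0)" and f="\<lambda>ys. ys ! 1"]])
     apply (auto intro!: cI c_ctl)
  done

lemma c_cnth: "computable n f \<Longrightarrow> computable n g \<Longrightarrow> computable n (\<lambda>xs. cnth (f xs) (g xs))"
  unfolding cnth_def by (auto intro!: c_chd c_ctln)

lemma c_clen: "computable n f \<Longrightarrow> computable n (\<lambda>xs. clen (f xs))"
  apply (rule lift1[where F=clen], simp_all)
  unfolding clen_def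
  apply (rule computable_cong[OF c_sum[where g="\<lambda>ys. if ctln (ys ! 1) (ys ! 0) = 0 then 0 else 1"
        and f="\<lambda>ys. ys ! 0"]])
    apply (auto intro!: cI c_ctln simp: cpred_def[symmetric])
  done

lemma c_capp: "computable n f \<Longrightarrow> computable n g \<Longrightarrow> computable n (\<lambda>xs. capp (f xs) (g xs))"
  apply (rule lift2[where F=capp], simp_all)
  unfolding capp_def
  apply (rule computable_cong[OF c_rec[where b="\<lambda>ys. ys ! 1"
      and s="\<lambda>ys. ccons (cnth (ys ! 2) (clen (ys ! 2) - Suc (ys ! 1))) (ys ! 0)" and f="\<lambda>ys. clen (ys ! 0)"]])
     apply (auto intro!: cI c_ccons c_cnth c_clen)
  done

lemma chd_enc[simp]: "chd (Suc (prod_encode (x, y))) = x"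
  unfolding chd_def using prod_decode_pf[of "prod_encode (x, y)"] by simp

lemma ctl_enc: "ctl (list_encode ys) = list_encode (tl ys)"
proof (cases ys)
  case Nil
  have "prod_decode 0 = (0, 0)" using prod_encode_inverse[of "(0,0)"] by (simp add: prod_encode_def)
  then show ?thesis using Nil prod_decode_pf[of 0] by (simp add: ctl_def)
next
  case (Cons x xs)
  then show ?thesis unfolding ctl_def using prod_decode_pf[of "prod_encode (x, list_encode xs)"] by simp
qed

lemma ctln_enc: "ctln (list_encode xs) i = list_encode (drop i xs)"
  by (induct i) (auto simp: ctln_def ctl_enc drop_Suc tl_drop)

lemma cnth_enc: "i < length xs \<Longrightarrow> cnth (list_encode xs) i = xs ! i"
  unfolding cnth_def ctln_enc by (simp add: Cons_nth_drop_Suc[symmetric])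

lemma length_le_enc: "length xs \<le> list_encode xs"
  by (induct xs) (auto simp: le_imp_less_Suc intro: order.trans[OF _ le_prod_encode_2])

lemma enc_eq0: "list_encode ys = 0 \<longleftrightarrow> ys = []"
  by (cases ys) auto

lemma clen_enc: "clen (list_encode xs) = length xs"
proof -
  have "clen (list_encode xs) = (\<Sum>i<list_encode xs. if i < length xs then 1 else 0)"
    unfolding clen_def ctln_enc enc_eq0 by (intro sum.cong) auto
  then show ?thesis using length_le_enc[of xs] sum_ind_less by simp
qed

lemma ccons_enc: "ccons x (list_encode ys) = list_encode (x # ys)"
  by (simp add: ccons_def)

lemma capp_enc: "capp (list_encode xs) (list_encode ys) = list_encode (xs @ ys)"
proof -
  let ?R = "\<lambda>k. rec_nat (list_encode ys) (\<lambda>k r. ccons (cnth (list_encode xs) (length xs - Suc k)) r) k"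
  have "k \<le> length xs \<Longrightarrow> ?R k = list_encode (drop (length xs - k) xs @ ys)" for k
  proof (induct k)
    case 0 then show ?case by simp
  next
    case (Suc k)
    have j: "length xs - Suc k < length xs" "Suc (length xs - Suc k) = length xs - k" using Suc.prems by auto
    have "drop (length xs - Suc k) xs = xs ! (length xs - Suc k) # drop (length xs - k) xs"
      using Cons_nth_drop_Suc[OF j(1), symmetric] j(2) by simp
    then show ?case using Suc by (simp add: ccons_enc cnth_enc)
  qed
  then show ?thesis unfolding capp_def clen_enc by simp
qed



fun run :: "automaton \<Rightarrow> nat \<Rightarrow> nat list \<Rightarrow> nat" where
  "run A p [] = p"
| "run A p (a # w) = run A (ttab A ! p ! a) w"

lemma run_append: "run A p (x @ y) = run A (run A p x) y"
  by (induct x arbitrary: p) auto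

lemma sm_append: "state_map A p (x @ y) = state_map A p x @ state_map A (run A p x) y"
  by (induct x arbitrary: p) auto

lemma run_valid: "expanding_automaton A \<Longrightarrow> p < nQ A \<Longrightarrow> set w \<subseteq> {..<nS A} \<Longrightarrow> run A p w < nQ A"
  by (induct w arbitrary: p) (auto simp: expanding_automaton_def)

lemma len_sm: "expanding_automaton A \<Longrightarrow> p < nQ A \<Longrightarrow> set w \<subseteq> {..<nS A} \<Longrightarrow> length w \<le> length (state_map A p w)"
proof (induct w arbitrary: p)
  case Nil then show ?case by simp
next
  case (Cons a w)
  then have "otab A ! p ! a \<noteq> []" "ttab A ! p ! a < nQ A"
    by (auto simp: expanding_automaton_def)
  with Cons show ?case by (cases "otab A ! p ! a") force+
qed

lemma first_diff:
  assumes "expanding_automaton A" "p < nQ A" "set u \<subseteq> {..<nS A}" "set v \<subseteq> {..<nS A}"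
    "u \<noteq> v" "state_map A p u = state_map A p v"
  shows "\<exists>x a b u1 v1. u = x @ a # u1 \<and> v = x @ b # v1 \<and> a \<noteq> b"
  using assms
proof (induct u arbitrary: p v)
  case Nil
  then obtain b v' where "v = b # v'" by (cases v) auto
  with Nil show ?case by (auto simp: expanding_automaton_def)
next
  case (Cons a u)
  show ?case
  proof (cases v)
    case Nil with Cons.prems show ?thesis by (auto simp: expanding_automaton_def)
  next
    case (Cons b v')
    show ?thesis
    proof (cases "a = b")
      case False then show ?thesis using Cons by (intro exI[of _ "[]"]) auto
    next
      case True
      have "ttab A ! p ! a < nQ A" using Cons.prems True \<open>v = b # v'\<close>
        by (auto simp: expanding_automaton_def)
      moreover have pre: "set u \<subseteq> {..<nS A}" "set v' \<subseteq> {..<nS A}" "u \<noteq> v'"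
        "state_map A (ttab A ! p ! a) u = state_map A (ttab A ! p ! a) v'"
        using Cons.prems True \<open>v = b # v'\<close> by auto
      ultimately obtain x a' b' u1 v1 where "u = x @ a' # u1 \<and> v' = x @ b' # v1 \<and> a' \<noteq> b'"
        using Cons.hyps[OF Cons.prems(1)] by blast
      then show ?thesis using True \<open>v = b # v'\<close> by (intro exI[of _ "a # x"]) auto
    qed
  qed
qed

definition dec :: "automaton \<Rightarrow> nat \<Rightarrow> nat list \<Rightarrow> nat \<Rightarrow> nat list \<Rightarrow> nat \<Rightarrow> nat list \<Rightarrow> bool" where
  "dec A p w k w1 c w2 \<longleftrightarrow> w = w1 @ c # w2 \<and> length (state_map A p w1) < k \<and>
     k \<le> length (state_map A p w1) + length (otab A ! run A p w1 ! c)"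

lemma dec_exists: "0 < k \<Longrightarrow> k \<le> length (state_map A p w) \<Longrightarrow> \<exists>w1 c w2. dec A p w k w1 c w2"
proof (induct w arbitrary: p k)
  case Nil then show ?case by simp
next
  case (Cons c w)
  show ?case
  proof (cases "k \<le> length (otab A ! p ! c)")
    case True then show ?thesis using Cons.prems by (intro exI[of _ "[]"]) (auto simp: dec_def)
  next
    case False
    then obtain w1 c' w2 where "dec A (ttab A ! p ! c) w (k - length (otab A ! p ! c)) w1 c' w2"
      using Cons by fastforce
    then show ?thesis using False
      by (intro exI[of _ "c # w1"]) (auto simp: dec_def)
  qed
qed

definition cfg :: "automaton \<Rightarrow> nat \<Rightarrow> nat list \<Rightarrow> nat \<Rightarrow> nat \<times> nat \<times> nat" where
  "cfg A p w k = (SOME t. \<exists>w1 c w2. dec A p w k w1 c w2 \<and> t = (run A p w1, c, k - length (state_map A p w1)))"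

lemma cfg_prop: "0 < k \<Longrightarrow> k \<le> length (state_map A p w) \<Longrightarrow>
  \<exists>w1 c w2. dec A p w k w1 c w2 \<and> cfg A p w k = (run A p w1, c, k - length (state_map A p w1))"
  unfolding cfg_def by (rule someI_ex) (use dec_exists in blast)



definition coll :: "automaton \<Rightarrow> nat \<Rightarrow> nat list \<Rightarrow> nat list \<Rightarrow> bool" where
  "coll A q u v \<longleftrightarrow> set u \<subseteq> {..<nS A} \<and> set v \<subseteq> {..<nS A} \<and> u \<noteq> v \<and> state_map A q u = state_map A q v"

lemma cut_one:
  assumes exp: "expanding_automaton A" and p: "p < nQ A" and w: "set (a # w) \<subseteq> {..<nS A}"
    and olen: "length (otab A ! p ! a) < k1" and k12: "k1 < k2" and k2: "k2 \<le> length (state_map A p (a # w))"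
    and eq: "cfg A p (a # w) k1 = cfg A p (a # w) k2"
  shows "\<exists>w'. set (a # w') \<subseteq> {..<nS A} \<and> length w' < length w \<and>
     state_map A p (a # w') = take k1 (state_map A p (a # w)) @ drop k2 (state_map A p (a # w))"
proof -
  let ?W = "state_map A p (a # w)"
  obtain w1 c w2 where d1: "dec A p (a # w) k1 w1 c w2"
    and c1: "cfg A p (a # w) k1 = (run A p w1, c, k1 - length (state_map A p w1))"
    using cfg_prop[of k1 A p "a # w"] olen k12 k2 by auto
  obtain w1' c' w2' where d2: "dec A p (a # w) k2 w1' c' w2'"
    and c2: "cfg A p (a # w) k2 = (run A p w1', c', k2 - length (state_map A p w1'))"
    using cfg_prop[of k2 A p "a # w"] k12 k2 by auto
  have cc: "c' = c" and rr: "run A p w1' = run A p w1"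
    and r: "k1 - length (state_map A p w1) = k2 - length (state_map A p w1')"
    using eq c1 c2 by auto
  let ?p' = "run A p w1" let ?o = "otab A ! ?p' ! c"
  let ?r = "k1 - length (state_map A p w1)"
  have W1: "?W = state_map A p w1 @ ?o @ state_map A (ttab A ! ?p' ! c) w2"
    using d1 by (simp add: dec_def sm_append)
  have W2: "?W = state_map A p w1' @ ?o @ state_map A (ttab A ! ?p' ! c) w2'"
    using d2 cc rr by (simp add: dec_def sm_append)
  have r1: "0 < ?r" "?r \<le> length ?o" using d1 by (auto simp: dec_def)
  have l1: "length (state_map A p w1) = k1 - ?r" using d1 by (auto simp: dec_def)
  have l2: "length (state_map A p w1') = k2 - ?r" using d2 r by (auto simp: dec_def)
  have tk: "take k1 ?W = state_map A p w1 @ take ?r ?o"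
    using W1 l1 r1 by (simp add: take_append)
  have dp: "drop k2 ?W = drop ?r ?o @ state_map A (ttab A ! ?p' ! c) w2'"
    using W2 l2 r1 k12 by (simp add: drop_append)
  have w1ne: "w1 \<noteq> []"
  proof
    assume "w1 = []"
    then show False using d1 olen by (auto simp: dec_def)
  qed
  then obtain w1t where w1t: "w1 = a # w1t" using d1 by (cases w1) (auto simp: dec_def)
  have split1: "a # w = w1 @ c # w2" and split2: "a # w = w1' @ c # w2'"
    using d1 d2 cc by (auto simp: dec_def)
  have "length w1 < length w1'"
  proof -
    from split1 split2 have "w1 @ c # w2 = w1' @ c # w2'" by simp
    then obtain us where "(w1 = w1' @ us \<and> us @ c # w2 = c # w2') \<or> (w1 @ us = w1' \<and> c # w2 = us @ c # w2')"
      unfolding append_eq_append_conv2 by blast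
    then show ?thesis
    proof
      assume "w1 = w1' @ us \<and> us @ c # w2 = c # w2'"
      then have "length (state_map A p w1') \<le> length (state_map A p w1)" by (simp add: sm_append)
      then show ?thesis using l1 l2 k12 r1 by simp
    next
      assume h: "w1 @ us = w1' \<and> c # w2 = us @ c # w2'"
      have "us \<noteq> []" using h l1 l2 k12 r1 by auto
      then show ?thesis using h by auto
    qed
  qed
  then have len: "length (w1t @ c # w2') < length w"
  proof -
    have "length (a # w) = length w1' + Suc (length w2')" using arg_cong[OF split2, of length] by simp
    then show ?thesis using \<open>length w1 < length w1'\<close> w1t by simp
  qed
  have "set w1 \<subseteq> set (a # w)" "set w2' \<subseteq> set (a # w)" "c \<in> set (a # w)"
  proof -
    have "set (a # w) = set w1 \<union> insert c (set w2)" using arg_cong[OF split1, of set] by simp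
    moreover have "set (a # w) = set w1' \<union> insert c (set w2')" using arg_cong[OF split2, of set] by simp
    ultimately show "set w1 \<subseteq> set (a # w)" "set w2' \<subseteq> set (a # w)" "c \<in> set (a # w)" by blast+
  qed
  then have st: "set (a # w1t @ c # w2') \<subseteq> {..<nS A}" using w w1t by auto
  have "state_map A p (a # w1t @ c # w2') = state_map A p w1 @ ?o @ state_map A (ttab A ! ?p' ! c) w2'"
    using w1t by (metis append_Cons sm_append state_map.simps(2) append.assoc)
  also have "\<dots> = take k1 ?W @ drop k2 ?W" using tk dp
    by (metis append.assoc append_take_drop_id)
  finally show ?thesis using len st by blast
qed



lemma noninj_pair:
  assumes "\<not> inj_on f K"
  obtains k1 k2 where "k1 \<in> K" "k2 \<in> K" "k1 < k2" "f k1 = f (k2::nat)"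
proof -
  obtain i j where "i \<in> K" "j \<in> K" "i \<noteq> j" "f i = f j" using assms unfolding inj_on_def by blast
  then show ?thesis using that by (cases "i < j") (auto simp: not_less_iff_gr_or_eq)
qed

lemma shorten:
  assumes exp: "expanding_automaton A" and q: "q < nQ A"
    and bQ: "nQ A \<le> N" and bS: "nS A \<le> N"
    and bO: "\<forall>p<nQ A. \<forall>a<nS A. length (otab A ! p ! a) \<le> N"
    and co: "coll A q u v"
    and big: "2 * N + (N * N * (N + 1)) * (N * N * (N + 1)) < length u \<or>
              2 * N + (N * N * (N + 1)) * (N * N * (N + 1)) < length v"
  shows "\<exists>u' v'. coll A q u' v' \<and> length u' + length v' < length u + length v"
proof -
  let ?F = "N * N * (N + 1)"
  have su: "set u \<subseteq> {..<nS A}" and sv: "set v \<subseteq> {..<nS A}" and ne: "u \<noteq> v"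
    and eq: "state_map A q u = state_map A q v" using co by (auto simp: coll_def)
  obtain x a b u1 v1 where u: "u = x @ a # u1" and v: "v = x @ b # v1" and ab: "a \<noteq> b"
    using first_diff[OF exp q su sv ne eq] by blast
  have sx: "set x \<subseteq> {..<nS A}" using su u by auto
  show ?thesis
  proof (cases "nQ A \<le> length x")
    case True
    define f where "f j = run A q (take j x)" for j
    have fj: "f j < nQ A" for j
      unfolding f_def by (intro run_valid[OF exp q] order.trans[OF set_take_subset sx])
    then have "f ` {..nQ A} \<subseteq> {..<nQ A}" by auto
    then have "\<not> inj_on f {..nQ A}"
      using card_inj_on_le[of f "{..nQ A}" "{..<nQ A}"] by auto
    then obtain j1 j2 where j: "j1 < j2" "j2 \<le> nQ A" and fj: "f j1 = f j2"
      by (rule noninj_pair) auto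
    define x1 where "x1 = take j1 x"
    define y where "y = drop j1 (take j2 x)"
    define x3 where "x3 = drop j2 x"
    have xs: "x = x1 @ y @ x3" unfolding x1_def y_def x3_def
      by (metis append.assoc append_take_drop_id j(1) less_imp_le_nat take_take min.absorb1)
    have ly: "length y = j2 - j1" using j True unfolding y_def by simp
    have ry: "run A (run A q x1) y = run A q x1"
      using fj unfolding f_def x1_def y_def
      by (metis run_append append_take_drop_id j(1) less_imp_le_nat take_take min.absorb1)
    have key: "state_map A q (x @ w) = state_map A q x1 @ state_map A (run A q x1) y @
                 state_map A (run A q x1) (x3 @ w)" for w
      using ry xs by (simp add: sm_append run_append)
    have key2: "state_map A q (x1 @ x3 @ w) = state_map A q x1 @ state_map A (run A q x1) (x3 @ w)" for w
      by (simp add: sm_append)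
    have "coll A q (x1 @ x3 @ a # u1) (x1 @ x3 @ b # v1)"
      unfolding coll_def
    proof (intro conjI)
      show "set (x1 @ x3 @ a # u1) \<subseteq> {..<nS A}" "set (x1 @ x3 @ b # v1) \<subseteq> {..<nS A}"
        using su sv u v xs by auto
      show "x1 @ x3 @ a # u1 \<noteq> x1 @ x3 @ b # v1" using ab by simp
      show "state_map A q (x1 @ x3 @ a # u1) = state_map A q (x1 @ x3 @ b # v1)"
        using eq key[of "a # u1"] key[of "b # v1"] key2 u v by simp
    qed
    moreover have "length (x1 @ x3 @ a # u1) + length (x1 @ x3 @ b # v1) < length u + length v"
      using u v xs ly j by simp
    ultimately show ?thesis by blast
  next
    case False
    define p where "p = run A q x"
    have p: "p < nQ A" using run_valid[OF exp q sx] p_def by simp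
    have sa: "set (a # u1) \<subseteq> {..<nS A}" and sb: "set (b # v1) \<subseteq> {..<nS A}" using su sv u v by auto
    define W where "W = state_map A p (a # u1)"
    have WW: "state_map A p (b # v1) = W"
      using eq u v by (simp add: sm_append W_def p_def)
    have lu: "length (a # u1) \<le> length W" using len_sm[OF exp p sa] W_def by simp
    have lv: "length (b # v1) \<le> length W" using len_sm[OF exp p sb] unfolding WW .
    have lW: "N + ?F * ?F < length W" using big u v False lu lv bQ by auto
    define C where "C = {..<nQ A} \<times> {..<nS A} \<times> {..N}"
    have cardC: "card C \<le> ?F"
    proof -
      have "card C = nQ A * (nS A * Suc N)" unfolding C_def by (simp add: card_cartesian_product)
      also have "\<dots> \<le> N * (N * Suc N)" using bQ bS by (intro mult_le_mono mult_le_mono1) auto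
      finally show ?thesis by (simp add: algebra_simps)
    qed
    have cfgC: "cfg A p w k \<in> C" if sw: "set w \<subseteq> {..<nS A}" and k: "0 < k" "k \<le> length (state_map A p w)" for w k
    proof -
      obtain w1 c w2 where d: "dec A p w k w1 c w2"
        and cf: "cfg A p w k = (run A p w1, c, k - length (state_map A p w1))"
        using cfg_prop[OF k] by blast
      have s1: "set w1 \<subseteq> {..<nS A}" and cS: "c < nS A" using d sw by (auto simp: dec_def)
      have rq: "run A p w1 < nQ A" using run_valid[OF exp p s1] .
      have "length (otab A ! run A p w1 ! c) \<le> N" using bO rq cS by auto
      then show ?thesis using cf rq cS d unfolding C_def dec_def by auto
    qed
    define g where "g k = (cfg A p (a # u1) k, cfg A p (b # v1) k)" for k
    define K where "K = {Suc N..length W}"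
    have gK: "g k \<in> C \<times> C" if "k \<in> K" for k
    proof -
      have k: "0 < k" "k \<le> length W" using that K_def by auto
      have "cfg A p (a # u1) k \<in> C" using cfgC[OF sa k(1)] k(2) unfolding W_def by blast
      moreover have "cfg A p (b # v1) k \<in> C" using cfgC[OF sb k(1)] k(2) unfolding WW[symmetric] by blast
      ultimately show ?thesis unfolding g_def by blast
    qed
    then have "g ` K \<subseteq> C \<times> C" by blast
    moreover have "card (C \<times> C) \<le> ?F * ?F" unfolding card_cartesian_product
      using cardC by (simp add: mult_le_mono)
    moreover have "card K = length W - N" unfolding K_def by simp
    moreover have "finite (C \<times> C)" unfolding C_def by simp
    ultimately have "\<not> inj_on g K" using lW card_inj_on_le[of g K "C \<times> C"] by auto
    then obtain k1 k2 where k: "k1 \<in> K" "k2 \<in> K" "k1 < k2" "g k1 = g k2" by (rule noninj_pair)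
    have oa: "length (otab A ! p ! a) < k1" using bO p sa k(1) unfolding K_def by fastforce
    have ob: "length (otab A ! p ! b) < k1" using bO p sb k(1) unfolding K_def by fastforce
    obtain u' where u': "set (a # u') \<subseteq> {..<nS A}" "length u' < length u1"
      "state_map A p (a # u') = take k1 W @ drop k2 W"
      using cut_one[OF exp p sa oa k(3)] k unfolding K_def g_def W_def by auto
    obtain v' where v': "set (b # v') \<subseteq> {..<nS A}" "length v' < length v1"
      "state_map A p (b # v') = take k1 W @ drop k2 W"
      using cut_one[OF exp p sb ob k(3)] k WW unfolding K_def g_def by auto
    have "coll A q (x @ a # u') (x @ b # v')"
      unfolding coll_def using u' v' sx ab by (auto simp: sm_append p_def[symmetric])
    moreover have "length (x @ a # u') + length (x @ b # v') < length u + length v"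
      using u v u' v' by simp
    ultimately show ?thesis by blast
  qed
qed

lemma small_coll:
  assumes exp: "expanding_automaton A" and q: "q < nQ A"
    and bQ: "nQ A \<le> N" and bS: "nS A \<le> N"
    and bO: "\<forall>p<nQ A. \<forall>a<nS A. length (otab A ! p ! a) \<le> N"
  shows "coll A q u v \<Longrightarrow> \<exists>u' v'. coll A q u' v' \<and>
      length u' \<le> 2 * N + (N * N * (N + 1)) * (N * N * (N + 1)) \<and>
      length v' \<le> 2 * N + (N * N * (N + 1)) * (N * N * (N + 1))"
proof (induct "length u + length v" arbitrary: u v rule: less_induct)
  case less
  show ?case
  proof (cases "length u \<le> 2 * N + (N * N * (N + 1)) * (N * N * (N + 1)) \<and>
      length v \<le> 2 * N + (N * N * (N + 1)) * (N * N * (N + 1))")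
    case True then show ?thesis using less.prems by blast
  next
    case False
    then obtain u' v' where "coll A q u' v'" "length u' + length v' < length u + length v"
      using shorten[OF exp q bQ bS bO less.prems] by (auto simp: not_le)
    then show ?thesis using less.hyps by blast
  qed
qed



definition tc :: "nat \<Rightarrow> nat \<Rightarrow> nat \<Rightarrow> nat" where "tc T p a = cnth (cnth T p) a"
definition oc :: "nat \<Rightarrow> nat \<Rightarrow> nat \<Rightarrow> nat" where "oc Ob p a = cnth (cnth Ob p) a"
definition stc :: "nat \<Rightarrow> nat \<Rightarrow> nat \<Rightarrow> nat \<Rightarrow> nat" where
  "stc T q w j = rec_nat q (\<lambda>k r. tc T r (cnth w k)) j"
definition smc :: "nat \<Rightarrow> nat \<Rightarrow> nat \<Rightarrow> nat \<Rightarrow> nat" where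
  "smc T Ob q w = rec_nat 0 (\<lambda>k r. capp (oc Ob (stc T q w (clen w - Suc k)) (cnth w (clen w - Suc k))) r) (clen w)"
definition validc :: "nat \<Rightarrow> nat \<Rightarrow> bool" where "validc S w \<longleftrightarrow> (\<forall>i<clen w. cnth w i < S)"
definition Bf :: "nat \<Rightarrow> nat" where "Bf N = 2 * N + (N * N * (N + 1)) * (N * N * (N + 1))"
definition cb :: "nat \<Rightarrow> nat \<Rightarrow> nat" where "cb N L = rec_nat 0 (\<lambda>k r. ccons N r) L"
definition good :: "nat \<Rightarrow> nat \<Rightarrow> nat \<Rightarrow> bool" where
  "good N c1 c2 \<longleftrightarrow> c1 \<noteq> c2 \<and> validc (cnth N 1) c1 \<and> validc (cnth N 1) c2 \<and>
     smc (cnth N 2) (cnth N 3) (cnth N 4) c1 = smc (cnth N 2) (cnth N 3) (cnth N 4) c2"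
definition ans :: "nat \<Rightarrow> nat" where
  "ans N = (if \<exists>c1<Suc (cb N (Bf N)). \<exists>c2<Suc (cb N (Bf N)). good N c1 c2 then 0 else 1)"

lemma cpred_cong: "cpred n P \<Longrightarrow> (\<And>xs. length xs = n \<Longrightarrow> P xs = Q xs) \<Longrightarrow> cpred n Q"
  unfolding cpred_def by (erule computable_cong) simp

lemma c_tc: "computable n f \<Longrightarrow> computable n g \<Longrightarrow> computable n h \<Longrightarrow> computable n (\<lambda>xs. tc (f xs) (g xs) (h xs))"
  unfolding tc_def by (intro c_cnth)
lemma c_oc: "computable n f \<Longrightarrow> computable n g \<Longrightarrow> computable n h \<Longrightarrow> computable n (\<lambda>xs. oc (f xs) (g xs) (h xs))"
  unfolding oc_def by (intro c_cnth)

lemma c_stc: "computable n f \<Longrightarrow> computable n g \<Longrightarrow> computable n h \<Longrightarrow> computable n i \<Longrightarrow>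
   computable n (\<lambda>xs. stc (f xs) (g xs) (h xs) (i xs))"
  apply (rule lift4[where F=stc], simp_all)
  unfolding stc_def
  apply (rule computable_cong[OF c_rec[where b="\<lambda>ys. ys ! 1"
      and s="\<lambda>zs. tc (zs ! 2) (zs ! 0) (cnth (zs ! 4) (zs ! 1))" and f="\<lambda>ys. ys ! 3"]])
     apply (auto intro!: cI c_tc c_cnth)
  done

lemma c_smc: "computable n f \<Longrightarrow> computable n g \<Longrightarrow> computable n h \<Longrightarrow> computable n i \<Longrightarrow>
   computable n (\<lambda>xs. smc (f xs) (g xs) (h xs) (i xs))"
  apply (rule lift4[where F=smc], simp_all)
  unfolding smc_def
  apply (rule computable_cong[OF c_rec[where b="\<lambda>ys. 0"
      and s="\<lambda>zs. capp (oc (zs ! 3) (stc (zs ! 2) (zs ! 4) (zs ! 5) (clen (zs ! 5) - Suc (zs ! 1)))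
                   (cnth (zs ! 5) (clen (zs ! 5) - Suc (zs ! 1)))) (zs ! 0)" and f="\<lambda>ys. clen (ys ! 3)"]])
     apply (auto intro!: cI c_oc c_stc c_cnth c_clen c_capp)
  done

lemma p_validc: "computable n f \<Longrightarrow> computable n g \<Longrightarrow> cpred n (\<lambda>xs. validc (f xs) (g xs))"
proof -
  assume f: "computable n f" and g: "computable n g"
  have "cpred 2 (\<lambda>ys. \<exists>i<clen (ys ! 1). (\<lambda>zs. \<not> cnth (zs ! 2) (zs ! 0) < zs ! 1) (i # ys))"
    by (rule p_ex) (auto intro!: cI c_cnth c_clen)
  then have "cpred 2 (\<lambda>ys. \<not> (\<exists>i<clen (ys ! 1). (\<lambda>zs. \<not> cnth (zs ! 2) (zs ! 0) < zs ! 1) (i # ys)))"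
    by (rule p_not)
  then have "computable 2 (\<lambda>ys. (\<lambda>a b. if validc a b then 1 else 0) (ys ! 0) (ys ! 1))"
    unfolding cpred_def by (rule computable_cong) (auto simp: validc_def)
  then show ?thesis unfolding cpred_def using f g by (rule lift2)
qed

lemma c_cb: "computable n f \<Longrightarrow> computable n g \<Longrightarrow> computable n (\<lambda>xs. cb (f xs) (g xs))"
  apply (rule lift2[where F=cb], simp_all)
  unfolding cb_def
  apply (rule computable_cong[OF c_rec[where b="\<lambda>ys. 0" and s="\<lambda>zs. ccons (zs ! 2) (zs ! 0)" and f="\<lambda>ys. ys ! 1"]])
     apply (auto intro!: cI c_ccons)
  done

lemma c_Bf: "computable n f \<Longrightarrow> computable n (\<lambda>xs. Bf (f xs))"
  unfolding Bf_def by (auto intro!: cI)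

lemma c_ans: "computable 1 (\<lambda>xs. ans (xs ! 0))"
proof -
  have g: "cpred (Suc (Suc (Suc 0))) (\<lambda>zs. good (zs ! 2) (zs ! 1) (zs ! 0))"
    unfolding good_def
    by (intro p_conj p_not p_eq p_validc c_smc c_cnth c_proj c_const) auto
  have e2: "cpred (Suc (Suc 0)) (\<lambda>ys. \<exists>i<Suc (cb (ys ! 1) (Bf (ys ! 1))). (\<lambda>zs. good (zs ! 2) (zs ! 1) (zs ! 0)) (i # ys))"
    by (rule p_ex[OF g]) (auto intro!: cI c_cb c_Bf)
  have e1: "cpred (Suc 0) (\<lambda>xs. \<exists>i<Suc (cb (xs ! 0) (Bf (xs ! 0))).
       (\<lambda>ys. \<exists>i<Suc (cb (ys ! 1) (Bf (ys ! 1))). (\<lambda>zs. good (zs ! 2) (zs ! 1) (zs ! 0)) (i # ys)) (i # xs))"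
    by (rule p_ex[OF e2]) (auto intro!: cI c_cb c_Bf)
  have "computable (Suc 0) (\<lambda>xs. if (\<exists>i<Suc (cb (xs ! 0) (Bf (xs ! 0))).
       (\<lambda>ys. \<exists>i<Suc (cb (ys ! 1) (Bf (ys ! 1))). (\<lambda>zs. good (zs ! 2) (zs ! 1) (zs ! 0)) (i # ys)) (i # xs))
       then 0 else 1)"
    by (rule c_if[OF e1]) (auto intro: c_const)
  then have "computable (Suc 0) (\<lambda>xs. ans (xs ! 0))" by (rule computable_cong) (simp add: ans_def)
  then show ?thesis by simp
qed



lemma mem_le_enc: "x \<in> set xs \<Longrightarrow> x \<le> list_encode xs"
proof (induct xs)
  case Nil then show ?case by simp
next
  case (Cons a xs)
  then show ?case
  proof (cases "x = a")
    case True then show ?thesis using le_prod_encode_1[of a "list_encode xs"] by simp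
  next
    case False
    then have "x \<le> list_encode xs" using Cons by simp
    then show ?thesis using le_prod_encode_2[of "list_encode xs" a] by simp
  qed
qed

lemma enc_inj: "list_encode a = list_encode b \<longleftrightarrow> a = b"
  by (metis list_encode_inverse)

lemma pe_mono: "a \<le> a' \<Longrightarrow> b \<le> b' \<Longrightarrow> prod_encode (a, b) \<le> prod_encode (a', b')"
  unfolding prod_encode_def using triangle_mono[of "a + b" "a' + b'"] by simp

lemma enc_le_cb: "set ws \<subseteq> {..N} \<Longrightarrow> length ws \<le> L \<Longrightarrow> list_encode ws \<le> cb N L"
proof (induct ws arbitrary: L)
  case Nil then show ?case by simp
next
  case (Cons x ws)
  then obtain L' where L: "L = Suc L'" by (cases L) auto
  have "list_encode ws \<le> cb N L'" using Cons L by simp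
  moreover have "x \<le> N" using Cons.prems by auto
  ultimately show ?case using L pe_mono by (simp add: cb_def ccons_def)
qed

context
  fixes A q
  assumes exp: "expanding_automaton A" and q: "q < nQ A"
begin

definition "TTc = list_encode (map list_encode (ttab A))"
definition "OTc = list_encode (map (\<lambda>row. list_encode (map list_encode row)) (otab A))"

lemma lens: "length (ttab A) = nQ A" "length (otab A) = nQ A"
  "p < nQ A \<Longrightarrow> length (ttab A ! p) = nS A" "p < nQ A \<Longrightarrow> length (otab A ! p) = nS A"
  using exp by (auto simp: expanding_automaton_def)

lemma tc_ok: "p < nQ A \<Longrightarrow> a < nS A \<Longrightarrow> tc TTc p a = ttab A ! p ! a"
  unfolding tc_def TTc_def using lens by (simp add: cnth_enc)

lemma oc_ok: "p < nQ A \<Longrightarrow> a < nS A \<Longrightarrow> oc OTc p a = list_encode (otab A ! p ! a)"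
proof -
  assume p: "p < nQ A" and a: "a < nS A"
  have "cnth OTc p = list_encode (map list_encode (otab A ! p))"
    unfolding OTc_def using lens p by (simp add: cnth_enc)
  then show ?thesis unfolding oc_def using lens p a by (simp add: cnth_enc)
qed

lemma stc_ok: "set ws \<subseteq> {..<nS A} \<Longrightarrow> j \<le> length ws \<Longrightarrow>
   stc TTc q (list_encode ws) j = run A q (take j ws)"
proof (induct j)
  case 0 then show ?case by (simp add: stc_def)
next
  case (Suc j)
  have j: "j < length ws" using Suc by simp
  have r: "run A q (take j ws) < nQ A"
    using run_valid[OF exp q] Suc.prems(1) set_take_subset by (meson order.trans)
  have a: "ws ! j < nS A" using Suc.prems(1) j nth_mem by blast
  have "stc TTc q (list_encode ws) (Suc j) = tc TTc (stc TTc q (list_encode ws) j) (cnth (list_encode ws) j)"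
    by (simp add: stc_def)
  also have "\<dots> = ttab A ! run A q (take j ws) ! (ws ! j)"
    using Suc j r a by (simp add: cnth_enc tc_ok)
  also have "\<dots> = run A q (take (Suc j) ws)"
    using j by (simp add: take_Suc_conv_app_nth run_append)
  finally show ?case .
qed

lemma smc_ok: "set ws \<subseteq> {..<nS A} \<Longrightarrow> smc TTc OTc q (list_encode ws) = list_encode (state_map A q ws)"
proof -
  assume sw: "set ws \<subseteq> {..<nS A}"
  let ?n = "length ws"
  let ?R = "\<lambda>k. rec_nat 0 (\<lambda>k r. capp (oc OTc (stc TTc q (list_encode ws) (?n - Suc k)) (cnth (list_encode ws) (?n - Suc k))) r) k"
  have "k \<le> ?n \<Longrightarrow> ?R k = list_encode (state_map A (run A q (take (?n - k) ws)) (drop (?n - k) ws))" for k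
  proof (induct k)
    case 0 then show ?case by simp
  next
    case (Suc k)
    define j where "j = ?n - Suc k"
    have j: "j < ?n" "Suc j = ?n - k" using Suc.prems unfolding j_def by auto
    have r: "run A q (take j ws) < nQ A"
      using run_valid[OF exp q] sw set_take_subset by (meson order.trans)
    have a: "ws ! j < nS A" using sw j nth_mem by blast
    have dr: "drop j ws = ws ! j # drop (?n - k) ws" using Cons_nth_drop_Suc[OF j(1), symmetric] j(2) by simp
    have rr: "run A q (take (?n - k) ws) = ttab A ! run A q (take j ws) ! (ws ! j)"
      using j by (metis take_Suc_conv_app_nth run_append run.simps)
    have "?R (Suc k) = capp (oc OTc (run A q (take j ws)) (ws ! j)) (?R k)"
      using j by (simp add: j_def[symmetric] stc_ok[OF sw] cnth_enc)
    also have "\<dots> = list_encode (otab A ! run A q (take j ws) ! (ws ! j) @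
        state_map A (run A q (take (?n - k) ws)) (drop (?n - k) ws))"
      using Suc r a by (simp add: oc_ok capp_enc)
    also have "\<dots> = list_encode (state_map A (run A q (take j ws)) (drop j ws))"
      using dr rr by simp
    finally show ?case unfolding j_def .
  qed
  from this[of ?n] show ?thesis unfolding smc_def clen_enc by simp
qed

lemma validc_ok: "validc S (list_encode ws) \<longleftrightarrow> set ws \<subseteq> {..<S}"
  unfolding validc_def clen_enc by (auto simp: cnth_enc in_set_conv_nth subset_iff)

lemma N_facts:
  defines "N \<equiv> encode_instance A q"
  shows "cnth N 1 = nS A" "cnth N 2 = TTc" "cnth N 3 = OTc" "cnth N 4 = q"
    "nQ A \<le> N" "nS A \<le> N" "\<forall>p<nQ A. \<forall>a<nS A. length (otab A ! p ! a) \<le> N"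
proof -
  have Ne: "N = list_encode [nQ A, nS A, TTc, OTc, q]"
    unfolding N_def encode_instance_def TTc_def OTc_def by simp
  show "cnth N 1 = nS A" "cnth N 2 = TTc" "cnth N 3 = OTc" "cnth N 4 = q"
    unfolding Ne by (subst cnth_enc, simp, simp)+
  show "nQ A \<le> N" "nS A \<le> N" unfolding Ne by (rule mem_le_enc, simp)+
  show "\<forall>p<nQ A. \<forall>a<nS A. length (otab A ! p ! a) \<le> N"
  proof (intro allI impI)
    fix p a assume p: "p < nQ A" and a: "a < nS A"
    have "length (otab A ! p ! a) \<le> list_encode (otab A ! p ! a)" by (rule length_le_enc)
    also have "\<dots> \<le> list_encode (map list_encode (otab A ! p))"
      by (rule mem_le_enc) (use a p lens in auto)
    also have "\<dots> \<le> OTc" unfolding OTc_def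
      by (rule mem_le_enc) (use p lens in \<open>auto intro!: image_eqI[where x="otab A ! p"]\<close>)
    also have "\<dots> \<le> N" unfolding Ne by (rule mem_le_enc) simp
    finally show "length (otab A ! p ! a) \<le> N" .
  qed
qed

lemma ans_ok: "ans (encode_instance A q) = (if inj_on (state_map A q) (lists {..<nS A}) then 1 else 0)"
proof -
  define N where "N = encode_instance A q"
  note NF = N_facts[folded N_def]
  have "(\<exists>c1<Suc (cb N (Bf N)). \<exists>c2<Suc (cb N (Bf N)). good N c1 c2) \<longleftrightarrow>
        \<not> inj_on (state_map A q) (lists {..<nS A})"
  proof
    assume "\<exists>c1<Suc (cb N (Bf N)). \<exists>c2<Suc (cb N (Bf N)). good N c1 c2"
    then obtain c1 c2 where g: "good N c1 c2" by blast
    define u where "u = list_decode c1"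
    define v where "v = list_decode c2"
    have c: "c1 = list_encode u" "c2 = list_encode v" unfolding u_def v_def by simp_all
    have "u \<noteq> v" using g c by (auto simp: good_def)
    moreover have su: "set u \<subseteq> {..<nS A}" and sv: "set v \<subseteq> {..<nS A}"
      using g c NF by (auto simp: good_def validc_ok)
    moreover have "state_map A q u = state_map A q v"
      using g c NF su sv by (auto simp: good_def smc_ok enc_inj)
    ultimately show "\<not> inj_on (state_map A q) (lists {..<nS A})"
      unfolding inj_on_def by auto
  next
    assume "\<not> inj_on (state_map A q) (lists {..<nS A})"
    then obtain u v where "coll A q u v" unfolding inj_on_def coll_def by auto
    then obtain u' v' where co: "coll A q u' v'" and lu: "length u' \<le> Bf N" and lv: "length v' \<le> Bf N"
      using small_coll[OF exp q NF(5) NF(6) NF(7)] unfolding Bf_def by blast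
    have su: "set u' \<subseteq> {..<nS A}" and sv: "set v' \<subseteq> {..<nS A}" using co by (auto simp: coll_def)
    have "set u' \<subseteq> {..N}" "set v' \<subseteq> {..N}" using su sv NF(6) by auto
    then have b: "list_encode u' < Suc (cb N (Bf N))" "list_encode v' < Suc (cb N (Bf N))"
      using enc_le_cb lu lv by (auto simp: le_imp_less_Suc)
    have "good N (list_encode u') (list_encode v')"
      using co su sv NF by (auto simp: good_def coll_def validc_ok smc_ok enc_inj)
    then show "\<exists>c1<Suc (cb N (Bf N)). \<exists>c2<Suc (cb N (Bf N)). good N c1 c2" using b by blast
  qed
  then show ?thesis unfolding ans_def N_def by auto
qed

end

theorem mainTheorem7:
  shows "\<exists>p :: recf. \<forall>A q. expanding_automaton A \<longrightarrow> q < nQ A \<longrightarrow>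
           eval p [encode_instance A q]
             (if inj_on (state_map A q) (lists {..<nS A}) then 1 else 0)"
proof -
  obtain p where p: "comp_by 1 p (\<lambda>xs. ans (xs ! 0))" using c_ans computable_def by blast
  show ?thesis
  proof (intro exI allI impI)
    fix A q assume "expanding_automaton A" "q < nQ A"
    then show "eval p [encode_instance A q] (if inj_on (state_map A q) (lists {..<nS A}) then 1 else 0)"
      using p[unfolded comp_by_def, rule_format, of "[encode_instance A q]"] ans_ok by simp
  qed
qed


end
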